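(* Let $\alpha\neq0$ be real, let $\vec a$ be a timelike vector of $\mathbb L^3$, and let $S$ be a spacelike surface of $\mathbb L^3$ that is invariant under the one-parameter group of rotations of $\mathbb L^3$ about a spacelike axis $L$. Suppose that $S$ satisfies $$H(p)=\alpha\frac{\langle N(p),\vec a\rangle}{\langle p,\vec a\rangle}\qquad (p\in S).$$ Then either $\vec a$ is orthogonal to $L$, or (up to a rigid motion taking $L$ to the $x$-axis) $S$ is the hyperbolic plane $\mathbb H^2(r)$ for some $r>0$, in which case $\vec a$ may be an arbitrary timelike vector.
   Context: $\mathbb L^3$ is $\mathbb R^3$ with the metric $\langle\cdot,\cdot\rangle=dx^2+dy^2-dz^2$. A spacelike surface has Riemannian induced metric and timelike unit normal $N$; $H$ denotes its mean curvature, the trace of the second fundamental form with respect to $N$. Rotations about a spacelike axis: when the axis is the $x$-axis, these are the linear isometries $\begin{pmatrix}1&0&0\\0&\cosh\theta&\sinh\theta\\0&\sinh\theta&\cosh\theta\end{pmatrix}$, $\theta\in\mathbb R$, and a general spacelike axis is obtained from this by a rigid motion. The hyperbolic plane is $\mathbb H^2(r)=\{p\in\mathbb L^3:\langle p,p\rangle=-r^2,\ z>0\}$. *)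

theory Defs
  imports "HOL-Analysis.Analysis"
begin

text \<open>Lorentz--Minkowski space L^3: points of real^3, coordinates x = p$1, y = p$2, z = p$3.\<close>

definition lor :: "real^3 \<Rightarrow> real^3 \<Rightarrow> real" where
  "lor p q = p$1 * q$1 + p$2 * q$2 - p$3 * q$3"

definition timelike :: "real^3 \<Rightarrow> bool" where
  "timelike v \<longleftrightarrow> lor v v < 0"

definition rigid_motion :: "(real^3 \<Rightarrow> real^3) \<Rightarrow> bool" where
  "rigid_motion \<Phi> \<longleftrightarrow> (\<exists>(M::real^3^3) b. (\<forall>x y. lor (M *v x) (M *v y) = lor x y)
                          \<and> \<Phi> = (\<lambda>x. M *v x + b))"

definition x_axis :: "(real^3) set" where
  "x_axis = {p. p$2 = 0 \<and> p$3 = 0}"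

definition rot_x :: "real \<Rightarrow> real^3 \<Rightarrow> real^3" where
  "rot_x \<theta> p = vector [p$1, cosh \<theta> * p$2 + sinh \<theta> * p$3, sinh \<theta> * p$2 + cosh \<theta> * p$3]"

definition hyperbolic_plane :: "real \<Rightarrow> (real^3) set" where
  "hyperbolic_plane r = {p. lor p p = - (r^2) \<and> p$3 > 0}"

definition C2_patch :: "(real \<times> real) set \<Rightarrow> (real \<times> real \<Rightarrow> real^3) \<Rightarrow> (real \<times> real \<Rightarrow> real^3)
   \<Rightarrow> (real \<times> real \<Rightarrow> real^3) \<Rightarrow> (real \<times> real \<Rightarrow> real^3) \<Rightarrow> (real \<times> real \<Rightarrow> real^3)
   \<Rightarrow> (real \<times> real \<Rightarrow> real^3) \<Rightarrow> bool" where
  "C2_patch U X Xu Xv Xuu Xuv Xvv \<longleftrightarrow> open U \<and>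
     (\<forall>w\<in>U.
        ((\<lambda>t. X (t, snd w)) has_vector_derivative Xu w) (at (fst w)) \<and>
        ((\<lambda>t. X (fst w, t)) has_vector_derivative Xv w) (at (snd w)) \<and>
        ((\<lambda>t. Xu (t, snd w)) has_vector_derivative Xuu w) (at (fst w)) \<and>
        ((\<lambda>t. Xu (fst w, t)) has_vector_derivative Xuv w) (at (snd w)) \<and>
        ((\<lambda>t. Xv (fst w, t)) has_vector_derivative Xvv w) (at (snd w))) \<and>
     continuous_on U X \<and> continuous_on U Xu \<and> continuous_on U Xv \<and>
     continuous_on U Xuu \<and> continuous_on U Xuv \<and> continuous_on U Xvv"

text \<open>A local parametrization of S (homeomorphism onto a relatively open piece of S)
  whose induced (Lorentz) metric E du^2 + 2F du dv + G dv^2 is Riemannian.\<close>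
definition spacelike_patch :: "(real^3) set \<Rightarrow> (real \<times> real) set \<Rightarrow> (real \<times> real \<Rightarrow> real^3)
   \<Rightarrow> (real \<times> real \<Rightarrow> real^3) \<Rightarrow> (real \<times> real \<Rightarrow> real^3) \<Rightarrow> (real \<times> real \<Rightarrow> real^3)
   \<Rightarrow> (real \<times> real \<Rightarrow> real^3) \<Rightarrow> (real \<times> real \<Rightarrow> real^3) \<Rightarrow> bool" where
  "spacelike_patch S U X Xu Xv Xuu Xuv Xvv \<longleftrightarrow>
     C2_patch U X Xu Xv Xuu Xuv Xvv \<and>
     (\<forall>w\<in>U. lor (Xu w) (Xu w) > 0 \<and>
             lor (Xu w) (Xu w) * lor (Xv w) (Xv w) - (lor (Xu w) (Xv w))^2 > 0) \<and>
     inj_on X U \<and> (\<exists>g. homeomorphism U (X ` U) X g) \<and>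
     (\<exists>V. open V \<and> X ` U = S \<inter> V)"

definition spacelike_surface :: "(real^3) set \<Rightarrow> bool" where
  "spacelike_surface S \<longleftrightarrow> S \<noteq> {} \<and> connected S \<and>
     (\<forall>p\<in>S. \<exists>U X Xu Xv Xuu Xuv Xvv. spacelike_patch S U X Xu Xv Xuu Xuv Xvv \<and> p \<in> X ` U)"

text \<open>Mean curvature at parameter w w.r.t. the timelike unit normal n:
  trace of the second fundamental form (e,f,g) = (<Xuu,n>,<Xuv,n>,<Xvv,n>)
  with respect to the first fundamental form (E,F,G).\<close>
definition mean_curv :: "(real \<times> real \<Rightarrow> real^3) \<Rightarrow> (real \<times> real \<Rightarrow> real^3) \<Rightarrow> (real \<times> real \<Rightarrow> real^3)
   \<Rightarrow> (real \<times> real \<Rightarrow> real^3) \<Rightarrow> (real \<times> real \<Rightarrow> real^3) \<Rightarrow> real^3 \<Rightarrow> real \<times> real \<Rightarrow> real" where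
  "mean_curv Xu Xv Xuu Xuv Xvv n w =
     (let E = lor (Xu w) (Xu w); F = lor (Xu w) (Xv w); G = lor (Xv w) (Xv w);
          e = lor (Xuu w) n; f = lor (Xuv w) n; g = lor (Xvv w) n
      in (e * G - 2 * f * F + g * E) / (E * G - F^2))"

end

theory Submission
  imports Defs
begin


lemma lor_sym: "lor x y = lor y x" by (simp add: lor_def algebra_simps)
lemma lor_add_left: "lor (x + y) z = lor x z + lor y z" by (simp add: lor_def algebra_simps)
lemma lor_diff_left: "lor (x - y) z = lor x z - lor y z" by (simp add: lor_def algebra_simps)
lemma lor_scale_left: "lor (c *\<^sub>R x) z = c * lor x z" by (simp add: lor_def algebra_simps)
lemma lor_add_right: "lor z (x + y) = lor z x + lor z y" by (simp add: lor_def algebra_simps)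
lemma lor_diff_right: "lor z (x - y) = lor z x - lor z y" by (simp add: lor_def algebra_simps)
lemma lor_scale_right: "lor z (c *\<^sub>R x) = c * lor z x" by (simp add: lor_def algebra_simps)

definition sg :: "3 \<Rightarrow> real" where "sg i = (if i = 3 then -1 else 1)"
definition liso :: "real^3^3 \<Rightarrow> bool" where "liso A \<longleftrightarrow> (\<forall>x y. lor (A *v x) (A *v y) = lor x y)"
definition minv :: "real^3^3 \<Rightarrow> real^3^3" where "minv M = (\<chi> i j. sg i * sg j * M$j$i)"

lemma mv3: "(A *v x) $ i = A$i$1 * x$1 + A$i$2 * x$2 + A$i$3 * x$3"
  for A :: "real^3^3"
  by (simp add: matrix_vector_mult_def sum_3)

lemma minv_comp: "(minv M *v y) $ i = sg i * lor (M *v axis i 1) y"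
  using exhaust_3[of i] by (auto simp: mv3 minv_def lor_def sg_def axis_def algebra_simps)

lemma lor_axis: "lor (axis i 1) x = sg i * x $ i"
  using exhaust_3[of i] by (auto simp: lor_def sg_def axis_def)

lemma minv_left: assumes "liso M" shows "minv M *v (M *v x) = x"
proof -
  have "(minv M *v (M *v x)) $ i = x $ i" for i
    using assms unfolding minv_comp liso_def lor_axis
    using exhaust_3[of i] by (auto simp: sg_def lor_axis)
  then show ?thesis by (simp add: vec_eq_iff)
qed

lemma minv_left_mat: assumes "liso M" shows "minv M ** M = mat 1"
  using minv_left[OF assms] by (simp add: matrix_eq matrix_vector_mul_assoc[symmetric])

lemma minv_right: assumes "liso M" shows "M *v (minv M *v x) = x"
proof -
  have "M ** minv M = mat 1" using minv_left_mat[OF assms] matrix_left_right_inverse by blast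
  then show ?thesis by (metis matrix_vector_mul_assoc matrix_vector_mul_lid)
qed

lemma liso_minv: assumes "liso M" shows "liso (minv M)"
  unfolding liso_def
proof (intro allI)
  fix x y
  have "lor (minv M *v x) (minv M *v y) = lor (M *v (minv M *v x)) (M *v (minv M *v y))"
    using assms by (simp add: liso_def)
  also have "\<dots> = lor x y" by (simp add: minv_right assms)
  finally show "lor (minv M *v x) (minv M *v y) = lor x y" .
qed

lemma liso_mult: "liso A \<Longrightarrow> liso B \<Longrightarrow> liso (A ** B)"
  by (simp add: liso_def matrix_vector_mul_assoc[symmetric])

lemma lor_M_left: assumes "liso M" shows "lor (M *v x) y = lor x (minv M *v y)"
  by (metis assms liso_def minv_right)

definition rotm :: "real \<Rightarrow> real^3^3" where
  "rotm t = (\<chi> i j. if i = 1 then (if j = 1 then 1 else 0) else if j = 1 then 0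
      else if i = j then cosh t else sinh t)"

lemma rot_x_rotm: "rot_x t p = rotm t *v p"
  by (simp add: vec_eq_iff forall_3 rot_x_def rotm_def mv3 vector_3)

lemma liso_rotm: "liso (rotm t)"
proof -
  have "cosh t ^ 2 - sinh t ^ 2 = 1" by (simp add: cosh_square_eq)
  then show ?thesis unfolding liso_def
    by (auto simp: lor_def mv3 rotm_def) (simp add: power2_eq_square algebra_simps; algebra)
qed

lemma hvd_aff:
  assumes "(g has_vector_derivative g') F"
  shows "((\<lambda>t. (A::real^3^3) *v g t + c) has_vector_derivative A *v g') F"
  unfolding has_vector_derivative_add_const
  by (rule bounded_linear.has_vector_derivative[OF matrix_vector_mul_bounded_linear assms])

lemma hvd_lin:
  assumes "(g has_vector_derivative g') F"
  shows "((\<lambda>t. (A::real^3^3) *v g t) has_vector_derivative A *v g') F"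
  by (rule bounded_linear.has_vector_derivative[OF matrix_vector_mul_bounded_linear assms])

lemma cont_lin:
  assumes "continuous_on U g"
  shows "continuous_on U (\<lambda>t. (A::real^3^3) *v g t)"
  using assms by (intro continuous_intros continuous_on_compose2[OF matrix_vector_mult_linear_continuous_on[of UNIV A]]) auto

lemma cont_aff:
  assumes "continuous_on U g"
  shows "continuous_on U (\<lambda>t. (A::real^3^3) *v g t + c)"
  using assms by (intro continuous_intros continuous_on_compose2[OF matrix_vector_mult_linear_continuous_on[of UNIV A]]) auto

lemma patch_affine:
  assumes P: "spacelike_patch S U X Xu Xv Xuu Xuv Xvv" and A: "liso A"
    and SS: "(\<lambda>p. A *v p + c) ` S = S"
  shows "spacelike_patch S U (\<lambda>w. A *v X w + c) (\<lambda>w. A *v Xu w) (\<lambda>w. A *v Xv w)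
           (\<lambda>w. A *v Xuu w) (\<lambda>w. A *v Xuv w) (\<lambda>w. A *v Xvv w)"
proof -
  define B where "B = minv A"
  define f where "f = (\<lambda>p. A *v p + c)"
  define h where "h = (\<lambda>p. B *v (p - c))"
  have fh: "f (h y) = y" for y by (simp add: f_def h_def B_def minv_right A)
  have hf: "h (f y) = y" for y by (simp add: f_def h_def B_def minv_left A)
  have cf: "continuous_on T f" for T unfolding f_def by (intro cont_aff continuous_intros)
  have ch: "continuous_on T h" for T 
  proof -
    have "h = (\<lambda>p. B *v p + (- (B *v c)))" by (auto simp: h_def matrix_vector_mult_diff_distrib)
    then show ?thesis using cont_aff[OF continuous_on_id, of T B "- (B *v c)"] by simp
  qed
  have C2: "C2_patch U X Xu Xv Xuu Xuv Xvv" using P by (simp add: spacelike_patch_def)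
  have C2': "C2_patch U (\<lambda>w. A *v X w + c) (\<lambda>w. A *v Xu w) (\<lambda>w. A *v Xv w)
           (\<lambda>w. A *v Xuu w) (\<lambda>w. A *v Xuv w) (\<lambda>w. A *v Xvv w)"
    using C2 unfolding C2_patch_def by (auto intro!: hvd_aff cont_aff hvd_lin cont_lin)
  have inj: "inj_on (\<lambda>w. A *v X w + c) U"
    using P hf unfolding spacelike_patch_def inj_on_def f_def by metis
  obtain g where g: "homeomorphism U (X ` U) X g" using P by (auto simp: spacelike_patch_def)
  have hf2: "homeomorphism UNIV UNIV f h"
    by (intro homeomorphismI) (simp_all add: fh hf cf ch)
  have hf3: "homeomorphism (X ` U) (f ` X ` U) f h"
    by (rule homeomorphism_of_subsets[OF hf2]) auto
  have hom: "homeomorphism U ((\<lambda>w. A *v X w + c) ` U) (\<lambda>w. A *v X w + c) (g \<circ> h)"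
  proof -
    have "homeomorphism U (f ` X ` U) (f \<circ> X) (g \<circ> h)" by (rule homeomorphism_compose[OF g hf3])
    moreover have "f \<circ> X = (\<lambda>w. A *v X w + c)" by (auto simp: f_def)
    moreover have "f ` X ` U = (\<lambda>w. A *v X w + c) ` U" by (auto simp: f_def)
    ultimately show ?thesis by simp
  qed
  obtain V where V: "open V" "X ` U = S \<inter> V" using P by (auto simp: spacelike_patch_def)
  have oV: "open (h -` V)" using ch[of UNIV] V(1) continuous_on_open_vimage[of UNIV h] by auto
  have SS': "f ` S = S" using SS by (simp add: f_def)
  have img: "(\<lambda>w. A *v X w + c) ` U = S \<inter> h -` V"
  proof -
    have "(\<lambda>w. A *v X w + c) ` U = f ` (S \<inter> V)" unfolding V(2)[symmetric] f_def by (simp add: image_image)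
    also have "\<dots> = S \<inter> h -` V"
    proof
      show "f ` (S \<inter> V) \<subseteq> S \<inter> h -` V" using SS' hf by auto
      show "S \<inter> h -` V \<subseteq> f ` (S \<inter> V)"
      proof
        fix y assume y: "y \<in> S \<inter> h -` V"
        then obtain x where x: "x \<in> S" "y = f x" using SS' by blast
        then have "h y = x" using hf by simp
        then show "y \<in> f ` (S \<inter> V)" using x y by auto
      qed
    qed
    finally show ?thesis .
  qed
  show ?thesis
    unfolding spacelike_patch_def
    using C2' inj hom img oV P A by (auto simp: spacelike_patch_def liso_def)
qed

lemma mean_curv_aff:
  assumes "liso A"
  shows "mean_curv (\<lambda>w. A *v Xu w) (\<lambda>w. A *v Xv w) (\<lambda>w. A *v Xuu w) (\<lambda>w. A *v Xuv w)
     (\<lambda>w. A *v Xvv w) (A *v n) w = mean_curv Xu Xv Xuu Xuv Xvv n w"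
  using assms by (simp add: mean_curv_def liso_def)



lemma unit_normal:
  assumes "lor u u * lor v v - (lor u v)^2 > 0"
  shows "\<exists>n. lor n n = -1 \<and> lor n u = 0 \<and> lor n v = 0"
proof -
  define D where "D = lor u u * lor v v - (lor u v)^2"
  define c :: "real^3" where "c = vector [u$2 * v$3 - u$3 * v$2, u$3 * v$1 - u$1 * v$3, -(u$1 * v$2 - u$2 * v$1)]"
  have cc: "lor c c = - D" unfolding c_def D_def lor_def
    by (simp only: vector_3) algebra
  have cu: "lor c u = 0" unfolding c_def lor_def by (simp add: vector_3 algebra_simps)
  have cv: "lor c v = 0" unfolding c_def lor_def by (simp add: vector_3 algebra_simps)
  have D: "D > 0" using assms by (simp add: D_def)
  define n where "n = (1 / sqrt D) *\<^sub>R c"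
  have "lor n n = (1/sqrt D)^2 * lor c c" by (simp add: n_def lor_scale_left lor_scale_right power2_eq_square)
  also have "\<dots> = -1" using D by (simp add: cc power_divide)
  finally have nn: "lor n n = -1" .
  have "lor n u = 0" "lor n v = 0" using cu cv by (simp_all add: n_def lor_scale_left)
  then show ?thesis using nn by blast
qed

lemma cosh_sinh_indep:
  fixes P Q R :: real
  assumes "\<forall>t. P + Q * cosh t + R * sinh t = 0"
  shows "P = 0 \<and> Q = 0 \<and> R = 0"
proof -
  have e0: "P + Q = 0" using assms[rule_format, of 0] by simp
  have e1: "P + Q * cosh 1 + R * sinh 1 = 0" using assms by blast
  have e2: "P + Q * cosh 1 - R * sinh 1 = 0" using assms[rule_format, of "-1"] by simp
  have s: "sinh (1::real) \<noteq> 0" by simp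
  have c: "cosh (1::real) \<noteq> 1" by simp
  have "R * sinh 1 = 0" using e1 e2 by linarith
  then have R: "R = 0" using s by simp
  have "P + Q * cosh 1 = 0" using e1 R by simp
  then have "Q * cosh 1 = Q * 1" using e0 by linarith
  then have "Q = 0" using c by (simp only: mult_cancel_left) simp
  then show ?thesis using e0 R by simp
qed

lemma lor_rotm: "lor (rotm t *v q) a = q$1*a$1 + cosh t * (q$2*a$2 - q$3*a$3) + sinh t * (q$3*a$2 - q$2*a$3)"
  by (simp add: lor_def mv3 rotm_def algebra_simps)

lemma key_alg:
  fixes q m a :: "real^3" and H \<alpha> k :: real
  assumes "\<forall>t. H * (lor (rotm t *v q) a + k) = \<alpha> * lor (rotm t *v m) a"
    and "lor a a < 0" and "a$1 \<noteq> 0"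
  shows "H *\<^sub>R (q - vector [-k/a$1, 0, 0]) = \<alpha> *\<^sub>R m"
proof -
  have "\<forall>t. (H*(q$1*a$1 + k) - \<alpha>*m$1*a$1) + (H*(q$2*a$2 - q$3*a$3) - \<alpha>*(m$2*a$2 - m$3*a$3)) * cosh t
      + (H*(q$3*a$2 - q$2*a$3) - \<alpha>*(m$3*a$2 - m$2*a$3)) * sinh t = 0"
  proof
    fix t show "(H*(q$1*a$1 + k) - \<alpha>*m$1*a$1) + (H*(q$2*a$2 - q$3*a$3) - \<alpha>*(m$2*a$2 - m$3*a$3)) * cosh t
      + (H*(q$3*a$2 - q$2*a$3) - \<alpha>*(m$3*a$2 - m$2*a$3)) * sinh t = 0"
      using assms(1)[rule_format, of t] unfolding lor_rotm by (simp add: algebra_simps)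
  qed
  from cosh_sinh_indep[OF this] have
    e1: "H*(q$1*a$1 + k) = \<alpha>*m$1*a$1" and
    e2: "(H*q$2 - \<alpha>*m$2)*a$2 - (H*q$3 - \<alpha>*m$3)*a$3 = 0" and
    e3: "(H*q$3 - \<alpha>*m$3)*a$2 - (H*q$2 - \<alpha>*m$2)*a$3 = 0"
    by (simp_all add: algebra_simps)
  define x where "x = H*q$2 - \<alpha>*m$2"
  define y where "y = H*q$3 - \<alpha>*m$3"
  have "a$1*a$1 \<ge> 0" by simp
  then have d: "a$2*a$2 - a$3*a$3 \<noteq> 0" using assms(2) unfolding lor_def by linarith
  have ex: "x*a$2 - y*a$3 = 0" "y*a$2 - x*a$3 = 0" using e2 e3 by (simp_all add: x_def y_def)
  have "x * (a$2*a$2 - a$3*a$3) = a$2*(x*a$2 - y*a$3) + a$3*(y*a$2 - x*a$3)"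
     "y * (a$2*a$2 - a$3*a$3) = a$3*(x*a$2 - y*a$3) + a$2*(y*a$2 - x*a$3)"
    by (simp_all add: algebra_simps)
  then have "x * (a$2*a$2 - a$3*a$3) = 0" "y * (a$2*a$2 - a$3*a$3) = 0" using ex by simp_all
  then have "x = 0" "y = 0" using d mult_eq_0_iff by metis+
  then have c2: "H*q$2 = \<alpha>*m$2" "H*q$3 = \<alpha>*m$3" by (simp_all add: x_def y_def)
  have c1: "H * (q$1 + k/a$1) = \<alpha>*m$1"
  proof -
    have "H * (q$1 + k/a$1) * a$1 = \<alpha>*m$1*a$1" using e1 assms(3) by (simp add: field_simps)
    then show ?thesis using assms(3) by simp
  qed
  show ?thesis using c1 c2 by (simp add: vec_eq_iff forall_3 vector_3 algebra_simps)
qed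



lemma deriv_comp:
  assumes "(\<gamma> has_vector_derivative \<gamma>') (at t)"
  shows "((\<lambda>t. \<gamma> t $ i) has_real_derivative \<gamma>' $ i) (at t)"
  unfolding has_real_derivative_iff_has_vector_derivative
  using bounded_linear.has_vector_derivative[OF bounded_linear_vec_nth assms] by simp

lemma deriv_lor:
  assumes "(\<gamma> has_vector_derivative \<gamma>') (at t)"
  shows "((\<lambda>t. lor (\<gamma> t - P) (\<gamma> t - P)) has_real_derivative 2 * lor (\<gamma> t - P) \<gamma>') (at t)"
proof -
  note d = deriv_comp[OF assms]
  have "((\<lambda>t. (\<gamma> t $ 1 - P$1) * (\<gamma> t $ 1 - P$1) + (\<gamma> t $ 2 - P$2) * (\<gamma> t $ 2 - P$2)
          - (\<gamma> t $ 3 - P$3) * (\<gamma> t $ 3 - P$3)) has_real_derivative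
        2 * lor (\<gamma> t - P) \<gamma>') (at t)"
    by (rule derivative_eq_intros d refl)+ (simp add: lor_def algebra_simps)
  then show ?thesis by (simp add: lor_def)
qed

lemma local_const:
  assumes P: "spacelike_patch S U X Xu Xv Xuu Xuv Xvv" and w0: "w0 \<in> U"
    and orth: "\<forall>w\<in>U. lor (X w - P0) (Xu w) = 0 \<and> lor (X w - P0) (Xv w) = 0"
  shows "\<exists>T. openin (top_of_set S) T \<and> X w0 \<in> T \<and> (\<forall>y\<in>T. lor (y - P0) (y - P0) = lor (X w0 - P0) (X w0 - P0))"
proof -
  define f where "f = (\<lambda>w. lor (X w - P0) (X w - P0))"
  have C2: "C2_patch U X Xu Xv Xuu Xuv Xvv" using P by (simp add: spacelike_patch_def)
  have oU: "open U" using C2 by (simp add: C2_patch_def)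
  obtain u0 v0 where w0e: "w0 = (u0, v0)" by fastforce
  obtain A B where AB: "open A" "open B" "w0 \<in> A \<times> B" "A \<times> B \<subseteq> U"
    using open_prod_elim[OF oU w0] by metis
  have "u0 \<in> A" "v0 \<in> B" using AB w0e by auto
  then obtain e1 e2 where e1: "e1 > 0" "ball u0 e1 \<subseteq> A" and e2: "e2 > 0" "ball v0 e2 \<subseteq> B"
    using AB open_contains_ball by metis
  define Bx where "Bx = ball u0 e1 \<times> ball v0 e2"
  have BxU: "Bx \<subseteq> U" using AB e1 e2 by (auto simp: Bx_def)
  have du: "((\<lambda>t. f (t, v)) has_real_derivative 0) (at u)" if "(u, v) \<in> U" for u v
  proof -
    have "((\<lambda>t. X (t, v)) has_vector_derivative Xu (u, v)) (at u)"
      using C2 that unfolding C2_patch_def by fastforce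
    from deriv_lor[OF this, of P0] show ?thesis using orth that by (simp add: f_def)
  qed
  have dv: "((\<lambda>t. f (u, t)) has_real_derivative 0) (at v)" if "(u, v) \<in> U" for u v
  proof -
    have "((\<lambda>t. X (u, t)) has_vector_derivative Xv (u, v)) (at v)"
      using C2 that unfolding C2_patch_def by fastforce
    from deriv_lor[OF this, of P0] show ?thesis using orth that by (simp add: f_def)
  qed
  have const: "f w = f w0" if "w \<in> Bx" for w
  proof -
    obtain u v where w: "w = (u, v)" by fastforce
    have u: "u \<in> ball u0 e1" and v: "v \<in> ball v0 e2" using that w by (auto simp: Bx_def)
    have "\<exists>c. \<forall>t\<in>ball v0 e2. f (u, t) = c"
    proof (rule has_field_derivative_zero_constant)
      fix t assume "t \<in> ball v0 e2"
      then have "(u, t) \<in> U" using BxU u by (auto simp: Bx_def)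
      then show "((\<lambda>t. f (u, t)) has_real_derivative 0) (at t within ball v0 e2)"
        using dv has_field_derivative_at_within by blast
    qed simp
    then obtain c1 where c1: "\<forall>t\<in>ball v0 e2. f (u, t) = c1" by blast
    have "\<exists>c. \<forall>t\<in>ball u0 e1. f (t, v0) = c"
    proof (rule has_field_derivative_zero_constant)
      fix t assume "t \<in> ball u0 e1"
      then have "(t, v0) \<in> U" using BxU e2 by (auto simp: Bx_def)
      then show "((\<lambda>t. f (t, v0)) has_real_derivative 0) (at t within ball u0 e1)"
        using du has_field_derivative_at_within by blast
    qed simp
    then obtain c2 where c2: "\<forall>t\<in>ball u0 e1. f (t, v0) = c2" by blast
    have "f (u, v) = f (u, v0)" using c1 v e2 by auto
    also have "\<dots> = f (u0, v0)" using c2 u e1 by auto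
    finally show ?thesis using w w0e by simp
  qed
  obtain g where g: "homeomorphism U (X ` U) X g" using P by (auto simp: spacelike_patch_def)
  obtain V where V: "open V" "X ` U = S \<inter> V" using P by (auto simp: spacelike_patch_def)
  have "open Bx" unfolding Bx_def by (intro open_Times open_ball)
  then have "openin (top_of_set U) Bx" using BxU by (rule open_subset[rotated])
  then have o1: "openin (top_of_set (X ` U)) (X ` Bx)" by (rule homeomorphism_imp_open_map[OF g])
  have o2: "openin (top_of_set S) (X ` U)" using V by (simp add: openin_open_Int)
  have o3: "openin (top_of_set S) (X ` Bx)" using openin_trans[OF o1 o2] .
  have "w0 \<in> Bx" using e1 e2 w0e by (simp add: Bx_def)
  then have "X w0 \<in> X ` Bx" by blast
  moreover have "\<forall>y\<in>X ` Bx. lor (y - P0) (y - P0) = lor (X w0 - P0) (X w0 - P0)"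
  proof
    fix y assume "y \<in> X ` Bx"
    then obtain w where "w \<in> Bx" "y = X w" by blast
    then show "lor (y - P0) (y - P0) = lor (X w0 - P0) (X w0 - P0)" using const[of w] by (simp add: f_def)
  qed
  ultimately show ?thesis using o3 by blast
qed



definition J3 :: "real^3^3" where "J3 = (\<chi> i j. if i = j then sg i else 0)"

lemma J3_mv: "J3 *v v = vector [v$1, v$2, - v$3]"
  by (simp add: vec_eq_iff forall_3 mv3 J3_def sg_def vector_3)

lemma liso_J3: "liso J3" by (simp add: liso_def J3_mv lor_def vector_3)
lemma liso_id: "liso (mat 1)" by (simp add: liso_def)

theorem proposition2p3:
  fixes \<alpha> :: real and a :: "real^3" and S :: "(real^3) set"
    and \<Psi> :: "real^3 \<Rightarrow> real^3" and L :: "(real^3) set"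
  assumes alpha_nz: "\<alpha> \<noteq> 0"
    and a_timelike: "timelike a"
    and surf: "spacelike_surface S"
    and axis: "rigid_motion \<Psi>" "L = \<Psi> ` x_axis"
    and invariant: "\<forall>\<theta>. (\<lambda>p. \<Psi> (rot_x \<theta> (inv \<Psi> p))) ` S = S"
    and denom: "\<forall>p\<in>S. lor p a \<noteq> 0"
    and eqn: "\<forall>U X Xu Xv Xuu Xuv Xvv w n.
               spacelike_patch S U X Xu Xv Xuu Xuv Xvv \<and> w \<in> U \<and>
               lor n n = -1 \<and> lor n (Xu w) = 0 \<and> lor n (Xv w) = 0 \<longrightarrow>
               mean_curv Xu Xv Xuu Xuv Xvv n w = \<alpha> * lor n a / lor (X w) a"
  shows "(\<forall>p\<in>L. \<forall>q\<in>L. lor a (p - q) = 0) \<or>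
         (\<exists>\<Phi> r. rigid_motion \<Phi> \<and> \<Phi> ` L = x_axis \<and> r > 0 \<and> \<Phi> ` S \<subseteq> hyperbolic_plane r)"
proof -
  obtain M b where M: "liso M" and Psi: "\<Psi> = (\<lambda>x. M *v x + b)"
    using axis(1) unfolding rigid_motion_def liso_def by blast
  define Mi where "Mi = minv M"
  have Mi: "liso Mi" using liso_minv[OF M] by (simp add: Mi_def)
  have MiM: "Mi *v (M *v x) = x" for x by (simp add: Mi_def minv_left M)
  have MMi: "M *v (Mi *v x) = x" for x by (simp add: Mi_def minv_right M)
  define a' where "a' = Mi *v a"
  have a'tl: "lor a' a' < 0" using a_timelike Mi by (simp add: a'_def liso_def timelike_def)
  have lorM: "lor (M *v x) a = lor x a'" for x by (simp add: lor_M_left[OF M] a'_def Mi_def)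
  have injPsi: "inj \<Psi>" unfolding inj_on_def Psi by (metis MiM add_right_cancel)
  have invPsi: "inv \<Psi> p = Mi *v (p - b)" for p
    by (rule inv_f_eq[OF injPsi]) (simp add: Psi MMi)
  show ?thesis
  proof (cases "a'$1 = 0")
    case True
    have "lor a (p - q) = 0" if pq: "p \<in> L" "q \<in> L" for p q
    proof -
      obtain x y where xy: "x \<in> x_axis" "y \<in> x_axis" "p = M *v x + b" "q = M *v y + b"
        using pq axis(2) Psi by auto
      have "p - q = M *v (x - y)" using xy by (simp add: matrix_vector_mult_diff_distrib)
      then have "lor a (p - q) = lor (x - y) a'" by (simp add: lor_sym[of a] lorM)
      also have "\<dots> = 0" using xy True by (simp add: x_axis_def lor_def)
      finally show ?thesis .
    qed
    then show ?thesis by blast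
  next
    case False
    define k where "k = lor b a"
    define c0 :: "real^3" where "c0 = vector [-k/a'$1, 0, 0]"
    define P0 where "P0 = M *v c0 + b"
    have PT: "mean_curv Xu Xv Xuu Xuv Xvv n w *\<^sub>R (X w - P0) = \<alpha> *\<^sub>R n"
      if P: "spacelike_patch S U X Xu Xv Xuu Xuv Xvv" and w: "w \<in> U"
        and n: "lor n n = -1" "lor n (Xu w) = 0" "lor n (Xv w) = 0"
      for U X Xu Xv Xuu Xuv Xvv w n
    proof -
      define H where "H = mean_curv Xu Xv Xuu Xuv Xvv n w"
      define q where "q = Mi *v (X w - b)"
      define m where "m = Mi *v n"
      have XwS: "X w \<in> S" using P w by (auto simp: spacelike_patch_def)
      have "\<forall>t. H * (lor (rotm t *v q) a' + k) = \<alpha> * lor (rotm t *v m) a'"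
      proof
        fix t
        define At where "At = M ** rotm t ** Mi"
        define ct where "ct = b - At *v b"
        have liA: "liso At" unfolding At_def by (intro liso_mult liso_rotm Mi M)
        have feq1: "\<Psi> (rot_x t (inv \<Psi> p)) = At *v p + ct" for p
        proof -
          have "\<Psi> (rot_x t (inv \<Psi> p)) = M *v (rotm t *v (Mi *v (p - b))) + b"
            by (simp only: invPsi rot_x_rotm) (simp add: Psi)
          also have "\<dots> = At *v p + ct"
            by (simp add: At_def ct_def matrix_vector_mul_assoc matrix_vector_mult_diff_distrib matrix_mul_assoc)
          finally show ?thesis .
        qed
        then have feq: "(\<lambda>p. \<Psi> (rot_x t (inv \<Psi> p))) = (\<lambda>p. At *v p + ct)" by blast
        have SS: "(\<lambda>p. At *v p + ct) ` S = S" using invariant feq by metis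
        note P' = patch_affine[OF P liA SS]
        have hyp: "spacelike_patch S U (\<lambda>w. At *v X w + ct) (\<lambda>w. At *v Xu w) (\<lambda>w. At *v Xv w)
           (\<lambda>w. At *v Xuu w) (\<lambda>w. At *v Xuv w) (\<lambda>w. At *v Xvv w) \<and> w \<in> U \<and>
           lor (At *v n) (At *v n) = -1 \<and> lor (At *v n) (At *v Xu w) = 0 \<and> lor (At *v n) (At *v Xv w) = 0"
          using P' w n liA by (simp add: liso_def)
        have e: "mean_curv (\<lambda>w. At *v Xu w) (\<lambda>w. At *v Xv w)
           (\<lambda>w. At *v Xuu w) (\<lambda>w. At *v Xuv w) (\<lambda>w. At *v Xvv w) (At *v n) w
           = \<alpha> * lor (At *v n) a / lor (At *v X w + ct) a"
          using eqn hyp by blast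
        then have e2: "H = \<alpha> * lor (At *v n) a / lor (At *v X w + ct) a"
          using mean_curv_aff[OF liA] by (simp add: H_def)
        have "At *v X w + ct \<in> S" using SS XwS by blast
        then have dnz: "lor (At *v X w + ct) a \<noteq> 0" using denom by blast
        have e3: "H * lor (At *v X w + ct) a = \<alpha> * lor (At *v n) a" using e2 dnz by simp
        have At_v: "At *v y = M *v (rotm t *v (Mi *v y))" for y
          by (simp add: At_def matrix_vector_mul_assoc matrix_mul_assoc)
        have "At *v X w + ct = At *v (X w - b) + b"
          by (simp add: ct_def matrix_vector_mult_diff_distrib)
        then have "lor (At *v X w + ct) a = lor (rotm t *v q) a' + k"
          by (simp add: lor_add_left At_v lorM q_def k_def)
        moreover have "lor (At *v n) a = lor (rotm t *v m) a'" by (simp add: At_v lorM m_def)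
        ultimately show "H * (lor (rotm t *v q) a' + k) = \<alpha> * lor (rotm t *v m) a'" using e3 by simp
      qed
      from key_alg[OF this a'tl False] have "H *\<^sub>R (q - c0) = \<alpha> *\<^sub>R m" by (simp add: c0_def)
      then have "M *v (H *\<^sub>R (q - c0)) = M *v (\<alpha> *\<^sub>R m)" by simp
      then have "H *\<^sub>R (X w - b - M *v c0) = \<alpha> *\<^sub>R n"
        by (simp add: matrix_vector_mult_scaleR matrix_vector_mult_diff_distrib q_def m_def MMi)
      then show ?thesis by (simp add: H_def P0_def algebra_simps)
    qed
    have orth: "lor (X w - P0) (Xu w) = 0 \<and> lor (X w - P0) (Xv w) = 0 \<and> lor (X w - P0) (X w - P0) < 0"
      if P: "spacelike_patch S U X Xu Xv Xuu Xuv Xvv" and w: "w \<in> U"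
      for U X Xu Xv Xuu Xuv Xvv w
    proof -
      have "lor (Xu w) (Xu w) * lor (Xv w) (Xv w) - (lor (Xu w) (Xv w))^2 > 0"
        using P w by (simp add: spacelike_patch_def)
      then obtain n where n: "lor n n = -1" "lor n (Xu w) = 0" "lor n (Xv w) = 0"
        using unit_normal by blast
      define H where "H = mean_curv Xu Xv Xuu Xuv Xvv n w"
      have h: "H *\<^sub>R (X w - P0) = \<alpha> *\<^sub>R n" using PT[OF P w n] by (simp add: H_def)
      have Hnz: "H \<noteq> 0"
      proof
        assume "H = 0"
        then have "n = 0" using h alpha_nz by simp
        then show False using n(1) by (simp add: lor_def)
      qed
      have "X w - P0 = (\<alpha> / H) *\<^sub>R n" using h Hnz
        by (metis (no_types, lifting) divide_inverse_commute mult.commute scaleR_right_imp_eq scaleR_scaleR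
            nonzero_inverse_eq_divide inverse_eq_divide right_inverse scaleR_one)
      moreover have "0 < \<alpha>*\<alpha>" "0 < H*H" using alpha_nz Hnz not_real_square_gt_zero by blast+
      then have "0 < \<alpha>*\<alpha>/(H*H)" by simp
      ultimately show ?thesis using n
        by (simp add: lor_scale_left lor_scale_right)
    qed
    define \<phi> where "\<phi> = (\<lambda>p. lor (p - P0) (p - P0))"
    have patch_at: "\<exists>U X Xu Xv Xuu Xuv Xvv w. spacelike_patch S U X Xu Xv Xuu Xuv Xvv \<and> w \<in> U \<and> p = X w"
      if "p \<in> S" for p
      using surf that unfolding spacelike_surface_def by blast
    have neg: "\<phi> p < 0" if "p \<in> S" for p
      using patch_at[OF that] orth unfolding \<phi>_def by blast
    have lc: "\<exists>T. openin (top_of_set S) T \<and> p \<in> T \<and> (\<forall>y\<in>T. \<phi> p = \<phi> y)" if pS: "p \<in> S" for p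
    proof -
      obtain U X Xu Xv Xuu Xuv Xvv w where P: "spacelike_patch S U X Xu Xv Xuu Xuv Xvv" "w \<in> U" "p = X w"
        using patch_at[OF pS] by blast
      have "\<forall>w\<in>U. lor (X w - P0) (Xu w) = 0 \<and> lor (X w - P0) (Xv w) = 0" using orth[OF P(1)] by blast
      from local_const[OF P(1) P(2) this] obtain T where T: "openin (top_of_set S) T" "X w \<in> T"
        "\<forall>y\<in>T. lor (y - P0) (y - P0) = lor (X w - P0) (X w - P0)" by blast
      show ?thesis
      proof (intro exI[of _ T] conjI ballI)
        show "openin (top_of_set S) T" by (rule T(1))
        show "p \<in> T" using T(2) P(3) by simp
        fix y assume "y \<in> T"
        then have "lor (y - P0) (y - P0) = lor (X w - P0) (X w - P0)" using T(3) by blast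
        then show "\<phi> p = \<phi> y" by (simp add: \<phi>_def P(3))
      qed
    qed
    have Sne: "S \<noteq> {}" using surf by (simp add: spacelike_surface_def)
    then obtain p0 where p0: "p0 \<in> S" by blast
    have conn: "connected S" using surf by (simp add: spacelike_surface_def)
    define C where "C = \<phi> p0"
    have phiC0: "\<phi> p0 = \<phi> p" if "p \<in> S" for p
    proof (rule connected_equivalence_relation[OF conn p0 that, where R = "\<lambda>x y. \<phi> x = \<phi> y"])
      fix q assume "q \<in> S" then show "\<exists>T. openin (top_of_set S) T \<and> q \<in> T \<and> (\<forall>x\<in>T. \<phi> q = \<phi> x)"
        by (rule lc)
    qed simp_all
    have phiC: "\<phi> p = C" if "p \<in> S" for p using phiC0[OF that] by (simp add: C_def)
    have Cneg: "C < 0" using neg[OF p0] by (simp add: C_def)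
    define r where "r = sqrt (- C)"
    have r: "r > 0" "r^2 = - C" using Cneg by (simp_all add: r_def)
    define z where "z = (\<lambda>p. (Mi *v (p - P0)) $ 3)"
    have lorMi: "lor (Mi *v (p - P0)) (Mi *v (p - P0)) = \<phi> p" for p using Mi by (simp add: liso_def \<phi>_def)
    have znz: "z p \<noteq> 0" if "p \<in> S" for p
    proof
      assume "z p = 0"
      then have "\<phi> p \<ge> 0" unfolding lorMi[symmetric] by (simp add: z_def lor_def)
      then show False using neg[OF that] by simp
    qed
    have zcont: "continuous_on UNIV z"
    proof -
      have "z = (\<lambda>v. v $ 3) \<circ> (\<lambda>p. Mi *v p + (- (Mi *v P0)))"
        by (auto simp: z_def matrix_vector_mult_diff_distrib)
      moreover have "continuous_on UNIV ((\<lambda>v. v $ 3) \<circ> (\<lambda>p. Mi *v p + (- (Mi *v P0))))"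
        by (intro continuous_on_compose cont_aff continuous_on_id linear_continuous_on bounded_linear_vec_nth)
      ultimately show ?thesis by simp
    qed
    have oz1: "open {p. 0 < z p}" using zcont by (intro open_Collect_less continuous_on_const) auto
    have oz2: "open {p. z p < 0}" using zcont by (intro open_Collect_less continuous_on_const) auto
    have zsign: "(0 < z p0) = (0 < z p)" if "p \<in> S" for p
    proof (rule connected_equivalence_relation[OF conn p0 that, where R = "\<lambda>x y. (0 < z x) = (0 < z y)"])
      fix p assume pS: "p \<in> S"
      show "\<exists>T. openin (top_of_set S) T \<and> p \<in> T \<and> (\<forall>x\<in>T. (0 < z p) = (0 < z x))"
      proof (cases "0 < z p")
        case True
        then show ?thesis using oz1 pS by (intro exI[of _ "S \<inter> {p. 0 < z p}"]) (auto intro: openin_open_Int)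
      next
        case False
        then have "z p < 0" using znz[OF pS] by linarith
        then show ?thesis using oz2 pS False
          by (intro exI[of _ "S \<inter> {p. z p < 0}"]) (auto intro: openin_open_Int)
      qed
    qed auto
    define \<sigma> where "\<sigma> = (if 0 < z p0 then mat 1 else J3)"
    have lis: "liso \<sigma>" by (simp add: \<sigma>_def liso_J3 liso_id)
    define Bm where "Bm = \<sigma> ** Mi"
    define \<Phi> where "\<Phi> = (\<lambda>x. Bm *v x + (- (Bm *v P0)))"
    have Phi_eq: "\<Phi> x = \<sigma> *v (Mi *v (x - P0))" for x
      by (simp add: \<Phi>_def Bm_def matrix_vector_mul_assoc matrix_vector_mult_diff_distrib)
    have rm: "rigid_motion \<Phi>"
      unfolding rigid_motion_def
    proof (intro exI conjI)
      show "\<forall>x y. lor (Bm *v x) (Bm *v y) = lor x y" using liso_mult[OF lis Mi] by (simp add: Bm_def liso_def)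
      show "\<Phi> = (\<lambda>x. Bm *v x + (- (Bm *v P0)))" by (simp add: \<Phi>_def)
    qed
    have sig_fix: "\<sigma> *v v = v" if "v \<in> x_axis" for v
      using that by (simp add: \<sigma>_def J3_mv x_axis_def vec_eq_iff forall_3 vector_3)
    have c0ax: "c0 \<in> x_axis" by (simp add: c0_def x_axis_def vector_3)
    have PhiPsi: "\<Phi> (\<Psi> x) = x - c0" if "x \<in> x_axis" for x
    proof -
      have "\<Psi> x - P0 = M *v (x - c0)" by (simp add: Psi P0_def matrix_vector_mult_diff_distrib)
      then have "\<Phi> (\<Psi> x) = \<sigma> *v (x - c0)" by (simp add: Phi_eq MiM)
      also have "\<dots> = x - c0" using that c0ax by (intro sig_fix) (simp add: x_axis_def)
      finally show ?thesis .
    qed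
    have imgL: "\<Phi> ` L = x_axis"
    proof
      show "\<Phi> ` L \<subseteq> x_axis"
      proof
        fix y assume "y \<in> \<Phi> ` L"
        then obtain x where x: "x \<in> x_axis" "y = \<Phi> (\<Psi> x)" unfolding axis(2) by blast
        then have "y = x - c0" using PhiPsi by blast
        then show "y \<in> x_axis" using x(1) c0ax by (simp add: x_axis_def)
      qed
      show "x_axis \<subseteq> \<Phi> ` L"
      proof
        fix y assume y: "y \<in> x_axis"
        then have "y + c0 \<in> x_axis" using c0ax by (simp add: x_axis_def)
        moreover have "\<Phi> (\<Psi> (y + c0)) = y" using PhiPsi[OF calculation] by simp
        ultimately show "y \<in> \<Phi> ` L" unfolding axis(2) by (metis image_eqI)
      qed
    qed
    have imgS: "\<Phi> ` S \<subseteq> hyperbolic_plane r"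
    proof
      fix y assume "y \<in> \<Phi> ` S"
      then obtain p where p: "p \<in> S" "y = \<Phi> p" by blast
      have "lor y y = \<phi> p" using lis p(2) by (simp add: Phi_eq liso_def lorMi)
      then have l: "lor y y = - (r^2)" using phiC[OF p(1)] r by simp
      have "0 < y $ 3"
      proof (cases "0 < z p0")
        case True
        then show ?thesis using zsign[OF p(1)] p(2) by (simp add: Phi_eq \<sigma>_def z_def)
      next
        case False
        then have "\<not> 0 < z p" using zsign[OF p(1)] by simp
        then have "z p < 0" using znz[OF p(1)] by linarith
        then show ?thesis using False p(2) by (simp add: Phi_eq \<sigma>_def z_def J3_mv vector_3)
      qed
      then show "y \<in> hyperbolic_plane r" using l by (simp add: hyperbolic_plane_def)
    qed
    show ?thesis using rm imgL r(1) imgS by blast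
  qed
qed

end
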